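(* Let $X$ be a Tychonoff regular locally Menger $p$-space and let $Y=bX\setminus X$ be a remainder of $X$ in some compactification $bX$. Then there is a compact subspace $K$ of $Y$ such that every closed subset $F$ of $Y$ with $F\cap K=\emptyset$ is a Lindelöf $p$-space (and hence every such $F$ is an $s$-space).
   Context: A space $X$ is Menger if for each sequence $(\mathcal{U}_n)$ of open covers of $X$ there is a sequence $(\mathcal{V}_n)$ with each $\mathcal{V}_n$ a finite subset of $\mathcal{U}_n$ and $\bigcup_{n}\bigcup\mathcal{V}_n=X$. A space $X$ is locally Menger if for each $x\in X$ there exist an open set $U$ and a Menger subspace $Y$ of $X$ with $x\in U\subseteq Y$. A Tychonoff space $X$ is a $p$-space if in some (equivalently, any) compactification $bX$ there is a countable family $\{\mathcal{U}_n:n\in\mathbb{N}\}$, each $\mathcal{U}_n$ a collection of open subsets of $bX$, such that for each $x\in X$, $x\in\bigcap_{n}\bigcup\{U\in\mathcal{U}_n:x\in U\}\subseteq X$. For a family $\mathcal{C}$ of subsets of $Z$, $\mathcal{C}_\delta$ is the family of intersections of nonempty subfamilies of $\mathcal{C}$ and $\mathcal{C}_{\delta,\sigma}$ the family of unions of subfamilies of $\mathcal{C}_\delta$; $\mathcal{C}$ is a source for $Y\subseteq Z$ if $Y\in\mathcal{C}_{\delta,\sigma}$. A Tychonoff space $X$ is an $s$-space if there is a countable source for $X$ in some (equivalently, any) compactification $bX$ consisting of open subsets of $bX$. *)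

theory Defs
  imports "HOL-Analysis.Analysis"
begin

definition Menger_space :: "'a topology \<Rightarrow> bool" where
  "Menger_space T \<longleftrightarrow>
     (\<forall>\<U> :: nat \<Rightarrow> 'a set set.
        (\<forall>n. (\<forall>U\<in>\<U> n. openin T U) \<and> topspace T \<subseteq> \<Union>(\<U> n)) \<longrightarrow>
        (\<exists>\<V> :: nat \<Rightarrow> 'a set set.
           (\<forall>n. finite (\<V> n) \<and> \<V> n \<subseteq> \<U> n) \<and>
           topspace T \<subseteq> (\<Union>n. \<Union>(\<V> n))))"

definition locally_Menger_space :: "'a topology \<Rightarrow> bool" where
  "locally_Menger_space T \<longleftrightarrow>
     (\<forall>x\<in>topspace T. \<exists>U Y. openin T U \<and> Y \<subseteq> topspace T \<and>
         Menger_space (subtopology T Y) \<and> x \<in> U \<and> U \<subseteq> Y)"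

definition Tychonoff_space :: "'a topology \<Rightarrow> bool" where
  "Tychonoff_space T \<longleftrightarrow> completely_regular_space T \<and> Hausdorff_space T"

definition compactification_of :: "'a topology \<Rightarrow> 'a set \<Rightarrow> bool" where
  "compactification_of bX S \<longleftrightarrow> compact_space bX \<and> Hausdorff_space bX \<and>
     S \<subseteq> topspace bX \<and> bX closure_of S = topspace bX"

definition p_space_wrt :: "'a topology \<Rightarrow> 'a set \<Rightarrow> bool" where
  "p_space_wrt bX S \<longleftrightarrow>
     (\<exists>\<U> :: nat \<Rightarrow> 'a set set. (\<forall>n. \<forall>U\<in>\<U> n. openin bX U) \<and>
        (\<forall>x\<in>S. x \<in> (\<Inter>n. \<Union>{U\<in>\<U> n. x \<in> U}) \<and> (\<Inter>n. \<Union>{U\<in>\<U> n. x \<in> U}) \<subseteq> S))"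

text \<open>S is a p-space (a Tychonoff space with the p-space property, tested in a compactification).
  For a subset S of a compact Hausdorff space B, the closure of S in B is a compactification of S.\<close>
definition p_space_in :: "'a topology \<Rightarrow> 'a set \<Rightarrow> bool" where
  "p_space_in B S \<longleftrightarrow> S \<subseteq> topspace B \<and> Tychonoff_space (subtopology B S) \<and>
     p_space_wrt (subtopology B (B closure_of S)) S"

definition delta_family :: "'a set set \<Rightarrow> 'a set set" where
  "delta_family \<C> = {\<Inter>\<D> | \<D>. \<D> \<subseteq> \<C> \<and> \<D> \<noteq> {}}"

definition delta_sigma_family :: "'a set set \<Rightarrow> 'a set set" where
  "delta_sigma_family \<C> = {\<Union>\<E> | \<E>. \<E> \<subseteq> delta_family \<C>}"

definition source_for :: "'a set set \<Rightarrow> 'a set \<Rightarrow> bool" where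
  "source_for \<C> Y \<longleftrightarrow> Y \<in> delta_sigma_family \<C>"

definition s_space_wrt :: "'a topology \<Rightarrow> 'a set \<Rightarrow> bool" where
  "s_space_wrt bX S \<longleftrightarrow>
     (\<exists>\<C>. countable \<C> \<and> (\<forall>C\<in>\<C>. openin bX C) \<and> source_for \<C> S)"

definition s_space_in :: "'a topology \<Rightarrow> 'a set \<Rightarrow> bool" where
  "s_space_in B S \<longleftrightarrow> S \<subseteq> topspace B \<and> Tychonoff_space (subtopology B S) \<and>
     s_space_wrt (subtopology B (B closure_of S)) S"

end

theory Submission
  imports Defs
begin


definition good_sep :: "'a topology \<Rightarrow> 'a set \<Rightarrow> 'a set \<Rightarrow> bool" where
  "good_sep bX X M \<longleftrightarrow> (\<exists>P::('a set \<times> 'a set) set. countable P \<and>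
     (\<forall>p\<in>P. openin bX (fst p) \<and> openin bX (snd p) \<and> bX closure_of (fst p) \<subseteq> snd p) \<and>
     (\<forall>x\<in>M. \<forall>y\<in>topspace bX - X. \<exists>p\<in>P. x \<in> fst p \<and> y \<notin> snd p))"

lemma Menger_imp_Lindelof:
  assumes "Menger_space T" shows "Lindelof_space T"
  unfolding Lindelof_space_def
proof (intro allI impI)
  fix \<U> assume U: "(\<forall>U\<in>\<U>. openin T U) \<and> \<Union>\<U> = topspace T"
  then obtain \<V> :: "nat \<Rightarrow> 'a set set" where V: "\<forall>n. finite (\<V> n) \<and> \<V> n \<subseteq> \<U>"
    "topspace T \<subseteq> (\<Union>n. \<Union>(\<V> n))"
  proof -
    have "\<forall>n. (\<forall>U\<in>(\<lambda>n::nat. \<U>) n. openin T U) \<and> topspace T \<subseteq> \<Union>((\<lambda>n::nat. \<U>) n)"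
      using U by auto
    note h = this
    have "\<exists>\<V> :: nat \<Rightarrow> 'a set set. (\<forall>n. finite (\<V> n) \<and> \<V> n \<subseteq> \<U>) \<and> topspace T \<subseteq> (\<Union>n. \<Union>(\<V> n))"
      using mp[OF spec[OF assms[unfolded Menger_space_def], of "\<lambda>n::nat. \<U>"] h] by simp
    then show ?thesis using that by blast
  qed
  show "\<exists>\<V>. countable \<V> \<and> \<V> \<subseteq> \<U> \<and> \<Union>\<V> = topspace T"
  proof (intro exI conjI)
    have cV: "countable (\<V> n)" for n using V(1) countable_finite by blast
    show "countable (\<Union>n. \<V> n)" by (rule countable_UN) (simp_all add: cV)
    show "(\<Union>n. \<V> n) \<subseteq> \<U>" using V(1) by blast
    have "\<Union>(\<Union>n. \<V> n) \<subseteq> \<Union>\<U>" using V(1) by (simp add: Sup_subset_mono UN_least)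
    moreover have "topspace T \<subseteq> \<Union>(\<Union>n. \<V> n)" using V(2) by blast
    ultimately show "\<Union>(\<Union>n. \<V> n) = topspace T" using U by auto
  qed
qed

lemma regular_shrink:
  assumes "regular_space bX" "openin bX W" "x \<in> W"
  shows "\<exists>D. openin bX D \<and> x \<in> D \<and> bX closure_of D \<subseteq> W"
proof -
  have "closedin bX (topspace bX - W)" using assms(2) by blast
  moreover have "x \<in> topspace bX - (topspace bX - W)" using assms openin_subset by fastforce
  ultimately obtain D where "openin bX D" "x \<in> D" "disjnt (topspace bX - W) (bX closure_of D)"
    using assms(1) unfolding regular_space by blast
  then show ?thesis using closure_of_subset_topspace[of bX D] unfolding disjnt_def by blast
qed

lemma good_sep_Lindelof:
  fixes \<U> :: "nat \<Rightarrow> 'a set set"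
  assumes reg: "regular_space bX"
    and Uo: "\<forall>n. \<forall>U\<in>\<U> n. openin bX U"
    and Up: "\<forall>x\<in>X. x \<in> (\<Inter>n. \<Union>{U\<in>\<U> n. x \<in> U}) \<and> (\<Inter>n. \<Union>{U\<in>\<U> n. x \<in> U}) \<subseteq> X"
    and MX: "M \<subseteq> X" and XT: "X \<subseteq> topspace bX"
    and L: "Lindelof_space (subtopology bX M)"
  shows "good_sep bX X M"
proof -
  have "\<exists>q. x \<in> X \<longrightarrow> (fst q \<in> \<U> n \<and> x \<in> fst q \<and> openin bX (snd q) \<and> x \<in> snd q \<and> bX closure_of (snd q) \<subseteq> fst q)" for x n
  proof (cases "x \<in> X")
    case True
    have "x \<in> (\<Inter>n. \<Union>{U\<in>\<U> n. x \<in> U})" using Up True by blast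
    then have "x \<in> \<Union>{U\<in>\<U> n. x \<in> U}" by blast
    then obtain U where U: "U \<in> \<U> n" "x \<in> U" by blast
    have "openin bX U" using Uo U(1) by blast
    then obtain D where "openin bX D \<and> x \<in> D \<and> bX closure_of D \<subseteq> U"
      using regular_shrink[OF reg _ U(2)] by blast
    then show ?thesis using U by (intro exI[of _ "(U,D)"]) auto
  qed auto
  then obtain q where q: "\<And>x n. x \<in> X \<Longrightarrow> fst (q x n) \<in> \<U> n \<and> x \<in> fst (q x n) \<and> openin bX (snd (q x n)) \<and> x \<in> snd (q x n) \<and> bX closure_of (snd (q x n)) \<subseteq> fst (q x n)"
    by metis
  have "\<exists>S. countable S \<and> S \<subseteq> M \<and> M \<subseteq> (\<Union>x\<in>S. snd (q x n))" for n
  proof -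
    let ?f = "\<lambda>x. M \<inter> snd (q x n)"
    have "(\<forall>U\<in>?f ` M. openin (subtopology bX M) U) \<and> \<Union>(?f ` M) = topspace (subtopology bX M)"
      using q MX XT by (auto intro!: openin_subtopology_Int2)
    then obtain V where "countable V" "V \<subseteq> ?f ` M" "\<Union>V = topspace (subtopology bX M)"
      using L unfolding Lindelof_space_def by meson
    then obtain S where S: "countable S" "S \<subseteq> M" "V = ?f ` S"
      using countable_subset_image by meson
    have "topspace (subtopology bX M) = M" using MX XT by auto
    then have "M \<subseteq> (\<Union>x\<in>S. snd (q x n))" using S \<open>\<Union>V = _\<close> by blast
    then show ?thesis using S by blast
  qed
  then obtain S where S: "\<And>n. countable (S n) \<and> S n \<subseteq> M \<and> M \<subseteq> (\<Union>x\<in>S n. snd (q x n))"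
    by metis
  define P where "P = (\<lambda>(n,x). (snd (q x n), fst (q x n))) ` (SIGMA n:UNIV. S n)"
  show ?thesis unfolding good_sep_def
  proof (intro exI[of _ P] conjI ballI)
    show "countable P" unfolding P_def using S by (intro countable_image countable_SIGMA) auto
    show "openin bX (fst p)" "openin bX (snd p)" "bX closure_of (fst p) \<subseteq> snd p" if "p \<in> P" for p
      using that S q Uo MX unfolding P_def by fastforce+
    fix x y assume x: "x \<in> M" and y: "y \<in> topspace bX - X"
    have "x \<in> X" using x MX by blast
    then have "(\<Inter>n. \<Union>{U\<in>\<U> n. x \<in> U}) \<subseteq> X" using Up by blast
    then have "y \<notin> (\<Inter>n. \<Union>{U\<in>\<U> n. x \<in> U})" using y by blast
    then obtain n where n: "y \<notin> \<Union>{U\<in>\<U> n. x \<in> U}" by blast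
    obtain s where s: "s \<in> S n" "x \<in> snd (q s n)" using S x by blast
    have sX: "s \<in> X" using s S MX by blast
    have "x \<in> fst (q s n)" using q[OF sX, of n] s closure_of_subset[of "snd (q s n)" bX]
      openin_subset by blast
    then have "y \<notin> fst (q s n)" using n q[OF sX, of n] by blast
    moreover have "(snd (q s n), fst (q s n)) \<in> P" unfolding P_def using s by force
    ultimately show "\<exists>p\<in>P. x \<in> fst p \<and> y \<notin> snd p" using s by (intro bexI[of _ "(snd (q s n), fst (q s n))"]) auto
  qed
qed



lemma good_sep_mono: "good_sep bX X M \<Longrightarrow> N \<subseteq> M \<Longrightarrow> good_sep bX X N"
proof -
  assume "good_sep bX X M" "N \<subseteq> M"
  then obtain P where "countable P" "\<forall>p\<in>P. openin bX (fst p) \<and> openin bX (snd p) \<and> bX closure_of (fst p) \<subseteq> snd p"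
     "\<forall>x\<in>M. \<forall>y\<in>topspace bX - X. \<exists>p\<in>P. x \<in> fst p \<and> y \<notin> snd p" unfolding good_sep_def by blast
  moreover have "\<forall>x\<in>N. \<forall>y\<in>topspace bX - X. \<exists>p\<in>P. x \<in> fst p \<and> y \<notin> snd p"
    using \<open>N \<subseteq> M\<close> calculation(3) by (simp add: subset_iff)
  ultimately show ?thesis unfolding good_sep_def by (intro exI[of _ P] conjI)
qed

lemma good_sep_UN:
  assumes "countable I" "\<And>i. i \<in> I \<Longrightarrow> good_sep bX X (M i)"
  shows "good_sep bX X (\<Union>i\<in>I. M i)"
proof -
  have "\<forall>i\<in>I. good_sep bX X (M i)" using assms(2) by simp
  then have "\<forall>i\<in>I. \<exists>P. countable P \<and>
     (\<forall>p\<in>P. openin bX (fst p) \<and> openin bX (snd p) \<and> bX closure_of (fst p) \<subseteq> snd p) \<and>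
     (\<forall>x\<in>M i. \<forall>y\<in>topspace bX - X. \<exists>p\<in>P. x \<in> fst p \<and> y \<notin> snd p)"
    unfolding good_sep_def .
  from bchoice[OF this] obtain P where P: "\<forall>i\<in>I. countable (P i) \<and>
     (\<forall>p\<in>P i. openin bX (fst p) \<and> openin bX (snd p) \<and> bX closure_of (fst p) \<subseteq> snd p) \<and>
     (\<forall>x\<in>M i. \<forall>y\<in>topspace bX - X. \<exists>p\<in>P i. x \<in> fst p \<and> y \<notin> snd p)"
    by (elim exE) (rule that)
  have P1: "countable (P i)" and P2: "\<And>p. p \<in> P i \<Longrightarrow> openin bX (fst p) \<and> openin bX (snd p) \<and> bX closure_of (fst p) \<subseteq> snd p"
    and P3: "\<And>x y. x \<in> M i \<Longrightarrow> y \<in> topspace bX - X \<Longrightarrow> \<exists>p\<in>P i. x \<in> fst p \<and> y \<notin> snd p"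
    if "i \<in> I" for i
    using bspec[OF P that] by simp_all
  have A: "countable (\<Union>i\<in>I. P i)" using assms(1) P1 by (intro countable_UN) auto
  have B: "\<forall>p\<in>(\<Union>i\<in>I. P i). openin bX (fst p) \<and> openin bX (snd p) \<and> bX closure_of (fst p) \<subseteq> snd p"
    using P2 by simp
  have C: "\<forall>x\<in>(\<Union>i\<in>I. M i). \<forall>y\<in>topspace bX - X. \<exists>p\<in>(\<Union>i\<in>I. P i). x \<in> fst p \<and> y \<notin> snd p"
  proof (intro ballI)
    fix x y assume x: "x \<in> (\<Union>i\<in>I. M i)" and y: "y \<in> topspace bX - X"
    then obtain i where i: "i \<in> I" "x \<in> M i" by blast
    then obtain p where "p \<in> P i" "x \<in> fst p" "y \<notin> snd p" using P3[OF i(1) i(2) y] by blast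
    then show "\<exists>p\<in>(\<Union>i\<in>I. P i). x \<in> fst p \<and> y \<notin> snd p" using i by (intro bexI[of _ p]) auto
  qed
  show ?thesis unfolding good_sep_def using A B C by (intro exI[of _ "\<Union>i\<in>I. P i"] conjI)
qed



lemma F_main:
  fixes bX :: "'a topology"
  assumes cpt: "compact_space bX" and XT: "X \<subseteq> topspace bX"
    and FY: "F \<subseteq> topspace bX - X" and Fc: "bX closure_of F - X \<subseteq> F"
    and G: "good_sep bX X (bX closure_of F \<inter> X)"
  shows "Lindelof_space (subtopology bX F) \<and> p_space_wrt (subtopology bX (bX closure_of F)) F
         \<and> s_space_wrt (subtopology bX (bX closure_of F)) F"
proof -
  define cl where "cl = bX closure_of F"
  have clT: "cl \<subseteq> topspace bX" unfolding cl_def by (rule closure_of_subset_topspace)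
  have Fcl: "F \<subseteq> cl" unfolding cl_def using FY by (intro closure_of_subset) blast
  have FX: "F \<inter> X = {}" using FY by blast
  obtain P0 where P0: "countable P0" "\<forall>p\<in>P0. openin bX (fst p) \<and> openin bX (snd p) \<and> bX closure_of (fst p) \<subseteq> snd p"
     "\<forall>x\<in>bX closure_of F \<inter> X. \<forall>y\<in>topspace bX - X. \<exists>p\<in>P0. x \<in> fst p \<and> y \<notin> snd p"
    using G unfolding good_sep_def by (elim exE conjE) (rule that)
  define P where "P = insert ({}, topspace bX) P0"
  have Pne: "P \<noteq> {}" unfolding P_def by simp
  have cP: "countable P" unfolding P_def using P0(1) by simp
  have Po1: "openin bX (fst p)" and Po2: "openin bX (snd p)" and Pcl: "bX closure_of (fst p) \<subseteq> snd p"
    if "p \<in> P" for p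
    using that P0(2) unfolding P_def by auto
  have Psub: "fst p \<subseteq> bX closure_of (fst p)" if "p \<in> P" for p
    using Po1[OF that] by (simp add: closure_of_subset openin_subset)
  have KEY: "\<exists>p\<in>P. z \<in> fst p \<and> y \<notin> snd p" if z: "z \<in> cl" "z \<notin> F" and y: "y \<in> F" for z y
  proof -
    have "z \<in> X" using z Fc unfolding cl_def by blast
    moreover have "y \<in> topspace bX - X" using y FY by blast
    ultimately obtain p where "p \<in> P0" "z \<in> fst p \<and> y \<notin> snd p" using P0(3) z(1) unfolding cl_def by blast
    then show ?thesis unfolding P_def by blast
  qed
  define pr where "pr = from_nat_into P"
  have prP: "pr n \<in> P" for n unfolding pr_def using Pne by (rule from_nat_into)
  have rng: "\<exists>n. pr n = p" if "p \<in> P" for p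
    using range_from_nat_into[OF Pne cP] that unfolding pr_def by (metis rangeE)
  have op1: "openin (subtopology bX cl) (cl - bX closure_of D)" for D
  proof -
    have "cl - bX closure_of D = cl \<inter> (topspace bX - bX closure_of D)" using clT by blast
    moreover have "openin bX (topspace bX - bX closure_of D)" by (simp add: openin_diff)
    ultimately show ?thesis by (metis openin_subtopology_Int2)
  qed
  have op2: "openin (subtopology bX cl) (cl \<inter> C)" if "openin bX C" for C
    using that by (simp add: openin_subtopology_Int2)
  define \<G> where "\<G> n = {cl - bX closure_of (fst (pr n)), cl \<inter> snd (pr n)}" for n
  have Gcov: "\<exists>U\<in>\<G> n. y \<in> U" if "y \<in> cl" for y n
  proof (cases "y \<in> snd (pr n)")
    case True
    then have "y \<in> cl \<inter> snd (pr n)" using that by simp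
    moreover have "cl \<inter> snd (pr n) \<in> \<G> n" unfolding \<G>_def by simp
    ultimately show ?thesis by (rule bexI)
  next
    case False then have "y \<notin> bX closure_of (fst (pr n))" using Pcl[OF prP[of n]] by blast
    then have "y \<in> cl - bX closure_of (fst (pr n))" using that by simp
    moreover have "cl - bX closure_of (fst (pr n)) \<in> \<G> n" unfolding \<G>_def by simp
    ultimately show ?thesis by (rule bexI)
  qed
  have pF: "p_space_wrt (subtopology bX cl) F"
    unfolding p_space_wrt_def
  proof (intro exI[of _ \<G>] conjI ballI allI)
    fix n U assume "U \<in> \<G> n"
    then show "openin (subtopology bX cl) U" unfolding \<G>_def using op1 op2 Po2[OF prP[of n]] by blast
  next
    fix y assume y: "y \<in> F"
    show "y \<in> (\<Inter>n. \<Union>{U\<in>\<G> n. y \<in> U})" using Gcov y Fcl by blast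
    show "(\<Inter>n. \<Union>{U\<in>\<G> n. y \<in> U}) \<subseteq> F"
    proof
      fix z assume z: "z \<in> (\<Inter>n. \<Union>{U\<in>\<G> n. y \<in> U})"
      have zn: "\<exists>U\<in>\<G> n. y \<in> U \<and> z \<in> U" for n using z by blast
      obtain U where "U \<in> \<G> 0" "z \<in> U" using zn[of 0] by blast
      then have zcl: "z \<in> cl" unfolding \<G>_def by blast
      show "z \<in> F"
      proof (rule ccontr)
        assume "z \<notin> F"
        then obtain p where p: "p \<in> P" "z \<in> fst p" "y \<notin> snd p" using KEY zcl y by blast
        then obtain n where n: "pr n = p" using rng by blast
        obtain U where U: "U \<in> \<G> n" "y \<in> U" "z \<in> U" using zn[of n] by blast
        have "z \<in> bX closure_of (fst p)" using Psub[OF p(1)] p(2) by blast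
        then show False using U p(3) n unfolding \<G>_def by blast
      qed
    qed
  qed
  define \<C> where "\<C> = insert cl ((\<lambda>p. cl - bX closure_of (fst p)) ` P)"
  define \<D> where "\<D> y = insert cl ((\<lambda>p. cl - bX closure_of (fst p)) ` {p\<in>P. y \<notin> snd p})" for y
  have D1: "\<Inter>(\<D> y) \<subseteq> F" if y: "y \<in> F" for y
  proof
    fix z assume z: "z \<in> \<Inter>(\<D> y)"
    then have zcl: "z \<in> cl" unfolding \<D>_def by blast
    show "z \<in> F"
    proof (rule ccontr)
      assume "z \<notin> F"
      then obtain p where p: "p \<in> P" "z \<in> fst p" "y \<notin> snd p" using KEY zcl y by blast
      then have "cl - bX closure_of (fst p) \<in> \<D> y" unfolding \<D>_def by blast
      then have "z \<notin> bX closure_of (fst p)" using z by blast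
      then show False using Psub[OF p(1)] p(2) by blast
    qed
  qed
  have D2: "y \<in> \<Inter>(\<D> y)" if y: "y \<in> F" for y
  proof -
    have "y \<notin> bX closure_of (fst p)" if "p \<in> P" "y \<notin> snd p" for p using Pcl[OF that(1)] that(2) by blast
    then show ?thesis using y Fcl unfolding \<D>_def by blast
  qed
  have sF: "s_space_wrt (subtopology bX cl) F"
    unfolding s_space_wrt_def
  proof (intro exI[of _ \<C>] conjI ballI)
    show "countable \<C>" unfolding \<C>_def using cP by simp
    fix C assume C: "C \<in> \<C>"
    have "openin (subtopology bX cl) cl" using openin_topspace[of "subtopology bX cl"] topspace_subtopology_subset[OF clT] by simp
    then show "openin (subtopology bX cl) C" using C op1 unfolding \<C>_def by blast
  next
    have "F = \<Union>((\<lambda>y. \<Inter>(\<D> y)) ` F)" using D1 D2 by blast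
    moreover have "(\<lambda>y. \<Inter>(\<D> y)) ` F \<subseteq> delta_family \<C>"
    proof
      fix A assume "A \<in> (\<lambda>y. \<Inter>(\<D> y)) ` F"
      then obtain y where "A = \<Inter>(\<D> y)" by blast
      moreover have "\<D> y \<subseteq> \<C>" "\<D> y \<noteq> {}" unfolding \<D>_def \<C>_def by blast+
      ultimately show "A \<in> delta_family \<C>" unfolding delta_family_def by blast
    qed
    ultimately show "source_for \<C> F" unfolding source_for_def delta_sigma_family_def by blast
  qed
  have LF: "Lindelof_space (subtopology bX F)"
    unfolding Lindelof_space_def
  proof (intro allI impI)
    fix \<O> assume O: "(\<forall>U\<in>\<O>. openin (subtopology bX F) U) \<and> \<Union>\<O> = topspace (subtopology bX F)"
    have FT: "F \<subseteq> topspace bX" using FY by blast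
    have tF: "topspace (subtopology bX F) = F" using FT by (rule topspace_subtopology_subset)
    have O1: "\<Union>\<O> = F" using O tF by simp
    have O2: "\<forall>U\<in>\<O>. \<exists>W. openin bX W \<and> U = W \<inter> F" using O by (simp add: openin_subtopology)
    obtain w where w: "\<forall>U\<in>\<O>. openin bX (w U) \<and> U = w U \<inter> F"
      using bchoice[OF O2] by (elim exE) (rule that)
    have w1: "openin bX (w U)" and w2: "U = w U \<inter> F" if "U \<in> \<O>" for U
      using bspec[OF w that] by simp_all
    define good where "good N \<O>' \<longleftrightarrow> finite \<O>' \<and> \<O>' \<subseteq> \<O> \<and> cl \<inter> (\<Inter>p\<in>N. topspace bX - fst p) \<subseteq> \<Union>(w ` \<O>')"
      for N :: "('a set \<times> 'a set) set" and \<O>'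
    have clc: "compactin bX cl" unfolding cl_def by (rule closedin_compact_space[OF cpt closedin_closure_of])
    have ex: "\<exists>N \<O>'. finite N \<and> N \<subseteq> {p\<in>P. y \<notin> snd p} \<and> good N \<O>'" if y: "y \<in> F" for y
    proof -
      define Q where "Q = {p\<in>P. y \<notin> snd p}"
      define A where "A = fst ` Q \<union> w ` \<O>"
      have Aop: "\<forall>U\<in>A. openin bX U" unfolding A_def Q_def using Po1 w1 by blast
      have "cl \<subseteq> \<Union>A"
      proof
        fix z assume z: "z \<in> cl"
        show "z \<in> \<Union>A"
        proof (cases "z \<in> F")
          case True then obtain U where U: "U \<in> \<O>" "z \<in> U" using O1 by blast
          then have "z \<in> w U" using w2[OF U(1)] by blast
          then show ?thesis using U(1) unfolding A_def by blast
        next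
          case False then obtain p where "p \<in> P" "z \<in> fst p" "y \<notin> snd p" using KEY z y by blast
          then show ?thesis unfolding A_def Q_def by blast
        qed
      qed
      then have "\<exists>\<A>. finite \<A> \<and> \<A> \<subseteq> A \<and> cl \<subseteq> \<Union>\<A>"
        using clc[unfolded compactin_def, THEN conjunct2, rule_format, of A] Aop by simp
      then obtain \<A> where A1: "finite \<A>" and A2: "\<A> \<subseteq> A" and A3: "cl \<subseteq> \<Union>\<A>" by (elim exE conjE)
      have "finite (\<A> \<inter> fst ` Q)" using A1 by simp
      then obtain N where N: "N \<subseteq> Q" "finite N" "\<A> \<inter> fst ` Q = fst ` N"
        using finite_subset_image[of "\<A> \<inter> fst ` Q" fst Q] by blast
      have "finite (\<A> \<inter> w ` \<O>)" using A1 by simp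
      then obtain \<O>' where O': "\<O>' \<subseteq> \<O>" "finite \<O>'" "\<A> \<inter> w ` \<O> = w ` \<O>'"
        using finite_subset_image[of "\<A> \<inter> w ` \<O>" w \<O>] by blast
      have "cl \<inter> (\<Inter>p\<in>N. topspace bX - fst p) \<subseteq> \<Union>(w ` \<O>')"
      proof
        fix z assume z: "z \<in> cl \<inter> (\<Inter>p\<in>N. topspace bX - fst p)"
        then obtain B where B: "B \<in> \<A>" "z \<in> B" using A3 by blast
        have "B \<notin> fst ` Q"
        proof
          assume "B \<in> fst ` Q"
          then have "B \<in> fst ` N" using N(3) B(1) by blast
          then obtain p where "p \<in> N" "B = fst p" by blast
          then show False using z B(2) by blast
        qed
        then have "B \<in> w ` \<O>'" using B(1) A2 O'(3) unfolding A_def by blast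
        then show "z \<in> \<Union>(w ` \<O>')" using B(2) by blast
      qed
      then have "good N \<O>'" unfolding good_def using O' by blast
      then show ?thesis using N unfolding Q_def by blast
    qed
    define g where "g N = (SOME \<O>'. good N \<O>')" for N
    have gN: "good N (g N)" if "\<exists>\<O>'. good N \<O>'" for N using someI_ex[OF that] unfolding g_def .
    define NN where "NN = {N. finite N \<and> N \<subseteq> P \<and> (\<exists>\<O>'. good N \<O>')}"
    define \<V> where "\<V> = \<Union>(g ` NN)"
    show "\<exists>\<V>. countable \<V> \<and> \<V> \<subseteq> \<O> \<and> \<Union>\<V> = topspace (subtopology bX F)"
    proof (intro exI[of _ \<V>] conjI)
      have "countable NN" unfolding NN_def
        by (rule countable_subset[OF _ countable_Collect_finite_subset[OF cP]]) blast
      moreover have "countable (g N)" if "N \<in> NN" for N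
        using gN that unfolding NN_def good_def by (simp add: countable_finite)
      ultimately show "countable \<V>" unfolding \<V>_def by (intro countable_UN) auto
      show VO: "\<V> \<subseteq> \<O>" unfolding \<V>_def NN_def using gN unfolding good_def by blast
      have "\<Union>\<V> \<subseteq> F" using VO O1 by blast
      moreover have "F \<subseteq> \<Union>\<V>"
      proof
        fix y assume y: "y \<in> F"
        then obtain N \<O>' where N: "finite N" "N \<subseteq> {p\<in>P. y \<notin> snd p}" "good N \<O>'" using ex[OF y] by blast
        then have NN: "N \<in> NN" unfolding NN_def by blast
        have gg: "good N (g N)" using gN N(3) by blast
        have "y \<notin> fst p" if "p \<in> N" for p
        proof -
          have "p \<in> P" "y \<notin> snd p" using that N(2) by blast+
          then show ?thesis using Psub Pcl by blast
        qed
        then have "y \<in> cl \<inter> (\<Inter>p\<in>N. topspace bX - fst p)" using y Fcl FT by blast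
        then obtain U where U: "U \<in> g N" "y \<in> w U" using gg unfolding good_def by blast
        have "U \<in> \<O>" using U(1) gg unfolding good_def by blast
        then have "y \<in> U" using w2 U(2) y by blast
        then show "y \<in> \<Union>\<V>" using U(1) NN unfolding \<V>_def by blast
      qed
      ultimately show "\<Union>\<V> = topspace (subtopology bX F)" using tF by blast
    qed
  qed
  show ?thesis using LF pF sF unfolding cl_def by simp
qed


theorem theorem5p1:
  fixes bX :: "'a topology" and X :: "'a set"
  assumes "compactification_of bX X"
    and "Tychonoff_space (subtopology bX X)"
    and "regular_space (subtopology bX X)"
    and "locally_Menger_space (subtopology bX X)"
    and "p_space_in bX X"
  shows "\<exists>K. K \<subseteq> topspace bX - X \<and> compactin (subtopology bX (topspace bX - X)) K \<and>
           (\<forall>F. closedin (subtopology bX (topspace bX - X)) F \<and> F \<inter> K = {} \<longrightarrow>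
                Lindelof_space (subtopology bX F) \<and> p_space_in bX F \<and> s_space_in bX F)"
proof -
  have cpt: "compact_space bX" and H: "Hausdorff_space bX" and XT: "X \<subseteq> topspace bX"
    and dense: "bX closure_of X = topspace bX"
    using assms(1) unfolding compactification_of_def by auto
  have reg: "regular_space bX" using compact_Hausdorff_imp_regular_space cpt H by blast
  have crs: "completely_regular_space bX"
    using normal_imp_completely_regular_space compact_Hausdorff_or_regular_imp_normal_space cpt H by blast
  have "p_space_wrt (subtopology bX (bX closure_of X)) X" using assms(5) unfolding p_space_in_def by simp
  then have "p_space_wrt bX X" using dense by simp
  then obtain \<U> :: "nat \<Rightarrow> 'a set set" where Uo: "\<forall>n. \<forall>U\<in>\<U> n. openin bX U"
    and Up: "\<forall>x\<in>X. x \<in> (\<Inter>n. \<Union>{U\<in>\<U> n. x \<in> U}) \<and> (\<Inter>n. \<Union>{U\<in>\<U> n. x \<in> U}) \<subseteq> X"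
    unfolding p_space_wrt_def by (elim exE conjE) (rule that)
  define \<V> where "\<V> = {V. openin bX V \<and> good_sep bX X (V \<inter> X)}"
  define Ob where "Ob = \<Union>\<V>"
  define K where "K = topspace bX - Ob"
  have Oo: "openin bX Ob" unfolding Ob_def \<V>_def by (rule openin_Union) blast
  have XO: "X \<subseteq> Ob"
  proof
    fix x assume x: "x \<in> X"
    have tX: "topspace (subtopology bX X) = X" using XT by (rule topspace_subtopology_subset)
    have xt: "x \<in> topspace (subtopology bX X)" using x tX by simp
    have "\<exists>U Y. openin (subtopology bX X) U \<and> Y \<subseteq> topspace (subtopology bX X) \<and>
         Menger_space (subtopology (subtopology bX X) Y) \<and> x \<in> U \<and> U \<subseteq> Y"
      using bspec[OF assms(4)[unfolded locally_Menger_space_def] xt] .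
    then obtain U Y where U: "openin (subtopology bX X) U" and YX: "Y \<subseteq> X"
      and MY: "Menger_space (subtopology (subtopology bX X) Y)" and xU: "x \<in> U" and UY: "U \<subseteq> Y"
      using tX by (elim exE conjE) simp
    have "subtopology (subtopology bX X) Y = subtopology bX Y"
      using YX by (simp add: subtopology_subtopology inf_absorb2)
    then have "Lindelof_space (subtopology bX Y)" using MY Menger_imp_Lindelof by simp
    then have gY: "good_sep bX X Y" by (rule good_sep_Lindelof[OF reg Uo Up YX XT])
    obtain V where V: "openin bX V" "U = V \<inter> X" using U by (auto simp: openin_subtopology)
    have "good_sep bX X (V \<inter> X)" using good_sep_mono[OF gY] V(2) UY by simp
    then have "V \<in> \<V>" using V(1) unfolding \<V>_def by simp
    moreover have "x \<in> V" using xU V(2) by simp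
    ultimately show "x \<in> Ob" unfolding Ob_def by blast
  qed
  show ?thesis
  proof (intro exI[of _ K] conjI allI impI)
    show KY: "K \<subseteq> topspace bX - X" using XO unfolding K_def by blast
    have "closedin bX K" unfolding K_def using Oo by (simp add: closedin_diff)
    then have "compactin bX K" by (rule closedin_compact_space[OF cpt])
    then show "compactin (subtopology bX (topspace bX - X)) K" using KY by (simp add: compactin_subtopology)
    fix F assume F: "closedin (subtopology bX (topspace bX - X)) F \<and> F \<inter> K = {}"
    obtain T where T: "closedin bX T" "F = T \<inter> (topspace bX - X)"
      using F by (auto simp: closedin_subtopology)
    have FY: "F \<subseteq> topspace bX - X" using T(2) by blast
    have clT: "bX closure_of F \<subseteq> T" using T by (intro closure_of_minimal) auto
    have clS: "bX closure_of F \<subseteq> topspace bX" by (rule closure_of_subset_topspace)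
    have Fc: "bX closure_of F - X \<subseteq> F" using clT clS T(2) by blast
    have clO: "bX closure_of F \<subseteq> Ob"
    proof
      fix z assume z: "z \<in> bX closure_of F"
      show "z \<in> Ob"
      proof (cases "z \<in> X")
        case True then show ?thesis using XO by blast
      next
        case False then have "z \<in> F" using Fc z by blast
        then show ?thesis using F clS z unfolding K_def by blast
      qed
    qed
    have "compactin bX (bX closure_of F)" by (rule closedin_compact_space[OF cpt closedin_closure_of])
    moreover have "\<forall>V\<in>\<V>. openin bX V" unfolding \<V>_def by blast
    ultimately have "\<exists>\<V>'. finite \<V>' \<and> \<V>' \<subseteq> \<V> \<and> bX closure_of F \<subseteq> \<Union>\<V>'"
      using clO unfolding Ob_def compactin_def by blast
    then obtain \<V>' where V1: "finite \<V>'" and V2: "\<V>' \<subseteq> \<V>" and V3: "bX closure_of F \<subseteq> \<Union>\<V>'"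
      by (elim exE conjE)
    have "good_sep bX X (\<Union>V\<in>\<V>'. V \<inter> X)"
      using V1 V2 unfolding \<V>_def by (intro good_sep_UN) (auto simp: countable_finite)
    moreover have "bX closure_of F \<inter> X \<subseteq> (\<Union>V\<in>\<V>'. V \<inter> X)" using V3 by blast
    ultimately have G: "good_sep bX X (bX closure_of F \<inter> X)" by (rule good_sep_mono)
    have R: "Lindelof_space (subtopology bX F) \<and> p_space_wrt (subtopology bX (bX closure_of F)) F
         \<and> s_space_wrt (subtopology bX (bX closure_of F)) F"
      by (rule F_main[OF cpt XT FY Fc G])
    have Ty: "Tychonoff_space (subtopology bX F)" unfolding Tychonoff_space_def
      using crs H by (simp add: completely_regular_space_subtopology Hausdorff_space_subtopology)
    show "Lindelof_space (subtopology bX F)" using R by simp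
    show "p_space_in bX F" using R Ty FY unfolding p_space_in_def by blast
    show "s_space_in bX F" using R Ty FY unfolding s_space_in_def by blast
  qed
qed

end
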